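(* For every $n\geq 2$, $\deg(\chi:\{0,1\}^n\to\{0,1\}^n)=3/2$.
   Context: For finite sets $X,Y$ and $f:X\to Y$, $\deg(f)=\frac{1}{|X|}\sum_{y\in Y}|f^{-1}(y)|^2$. Identify $w=w_1\cdots w_n\in\{0,1\}^n$ with a configuration of chips on a path with vertices $1,\dots,n$ (vertex $i$ holds $w_i$ chips); this is the unwrapping of a cycle with $n+1$ vertices, where the extra vertex is a sink adjacent to both vertex $1$ (the source) and vertex $n$. Firing: whenever a vertex holds at least $2$ chips, it sends one chip to each of its two neighbors in the cycle; chips sent to the sink disappear (so an endpoint vertex of the path sends one chip to its path neighbor and loses one chip). Firings are repeated until every vertex holds $0$ or $1$ chip (the final configuration does not depend on the order of firings). Define $\chi(w)$ to be the stable configuration obtained by adding one chip to vertex $1$ of the configuration $w$ and then firing until stable. For example, with $n=3$, $\chi(110)=101$. *)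

theory Defs
  imports Complex_Main
begin

definition deg :: "'a set \<Rightarrow> 'b set \<Rightarrow> ('a \<Rightarrow> 'b) \<Rightarrow> real" where
  "deg X Y f = (\<Sum>y\<in>Y. (real (card {x\<in>X. f x = y}))^2) / real (card X)"

(* binary words of length n, w = w_1 ... w_n stored as list; index i (0-based) = vertex i+1 *)
definition words :: "nat \<Rightarrow> nat list set" where
  "words n = {w. length w = n \<and> set w \<subseteq> {0,1}}"

(* firing vertex i (0-based) of the path: lose 2 chips, one to each neighbour in the
   cycle; chips sent to the sink (beyond either end of the path) disappear *)
definition fire :: "nat list \<Rightarrow> nat \<Rightarrow> nat list" where
  "fire c i = (let n = length c;
                   c1 = c[i := c!i - 2];
                   c2 = (if 0 < i then c1[i - 1 := c1!(i - 1) + 1] else c1)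
               in if i + 1 < n then c2[i + 1 := c2!(i + 1) + 1] else c2)"

definition fire_step :: "(nat list \<times> nat list) set" where
  "fire_step = {(c, d). \<exists>i < length c. 2 \<le> c!i \<and> d = fire c i}"

definition stable :: "nat list \<Rightarrow> bool" where
  "stable c \<longleftrightarrow> (\<forall>i < length c. c!i \<le> 1)"

definition add_source :: "nat list \<Rightarrow> nat list" where
  "add_source w = (case w of [] \<Rightarrow> [] | a # v \<Rightarrow> Suc a # v)"

(* chi w: the stable configuration obtained by adding a chip at vertex 1 and firing
   until stable (the result is independent of the firing order) *)
definition chi :: "nat list \<Rightarrow> nat list" where
  "chi w = (THE s. (add_source w, s) \<in> fire_step\<^sup>* \<and> stable s)"

end

theory Submission
  imports Defs
begin


fun hchi :: "nat list \<Rightarrow> nat list" where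
  "hchi [] = [0]"
| "hchi (a # t) = (if a = 0 then 0 # 1 # t else 1 # hchi t)"

definition bump :: "nat list \<Rightarrow> nat list" where
  "bump p = (if p = [] then [] else butlast p @ [Suc (last p)])"

lemma stable_set: "stable c \<longleftrightarrow> (\<forall>x\<in>set c. x \<le> 1)"
  unfolding stable_def by (auto simp: all_set_conv_all_nth)

lemma fire_hot: "fire (p @ 2 # t) (length p) = bump p @ 0 # add_source t"
proof (cases p rule: rev_exhaust)
  case Nil
  then show ?thesis by (cases t) (auto simp: fire_def bump_def add_source_def Let_def)
next
  case (snoc q a)
  then show ?thesis
    by (cases t) (auto simp: fire_def bump_def add_source_def Let_def list_update_append nth_append)
qed

lemma stable_no_step: "stable c \<Longrightarrow> (c, d) \<notin> fire_step"
  unfolding stable_def fire_step_def by force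

lemma stable_rtrancl: "stable c \<Longrightarrow> (c, s) \<in> fire_step\<^sup>* \<Longrightarrow> s = c"
  by (erule converse_rtranclE) (auto dest: stable_no_step)

lemma hot_step:
  assumes "\<forall>x\<in>set p. x \<le> 1" "\<forall>x\<in>set t. x \<le> 1"
  shows "(p @ 2 # t, d) \<in> fire_step \<longleftrightarrow> d = bump p @ 0 # add_source t"
proof
  assume "(p @ 2 # t, d) \<in> fire_step"
  then obtain i where i: "i < length (p @ 2 # t)" "2 \<le> (p @ 2 # t) ! i" "d = fire (p @ 2 # t) i"
    unfolding fire_step_def by auto
  have "i = length p"
  proof (rule ccontr)
    assume ne: "i \<noteq> length p"
    show False
    proof (cases "i < length p")
      case True
      then have "p ! i \<le> 1" using assms(1) by auto
      then show False using i True by (auto simp: nth_append)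
    next
      case False
      then obtain k where k: "i = length p + Suc k" using ne by (metis add_Suc_right less_imp_Suc_add linorder_neqE_nat)
      then have "k < length t" using i by auto
      then have "t ! k \<le> 1" using assms(2) by auto
      then show False using i k by (auto simp: nth_append)
    qed
  qed
  then show "d = bump p @ 0 # add_source t" using i fire_hot by simp
next
  assume "d = bump p @ 0 # add_source t"
  then show "(p @ 2 # t, d) \<in> fire_step"
    unfolding fire_step_def using fire_hot[of p t] by (auto intro!: exI[of _ "length p"])
qed

lemma hot_main:
  assumes "\<forall>x\<in>set t. x \<le> 1"
  shows "\<forall>x\<in>set p. x \<le> 1 \<Longrightarrow> (p = [] \<or> last p = 0) \<Longrightarrow>
     ((p @ 2 # t, s) \<in> fire_step\<^sup>* \<and> stable s) \<longleftrightarrow> s = bump p @ hchi t"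
  using assms
proof (induction t arbitrary: p s)
  case Nil
  let ?d = "bump p @ [0]"
  have st: "(p @ [2], ?d) \<in> fire_step" using hot_step[of p "[]"] Nil by (simp add: add_source_def)
  have sd: "stable ?d" using Nil by (auto simp: stable_set bump_def dest: in_set_butlastD)
  have "p @ [2] \<noteq> s" if "stable s" using that by (auto simp: stable_set)
  show ?case
  proof
    assume a: "(p @ [2], s) \<in> fire_step\<^sup>* \<and> stable s"
    then have "p @ [2] \<noteq> s" by (auto simp: stable_set)
    then obtain d where "(p @ [2], d) \<in> fire_step" "(d, s) \<in> fire_step\<^sup>*"
      using a by (meson converse_rtranclE)
    then show "s = bump p @ hchi []" using hot_step[of p "[]"] Nil sd stable_rtrancl
      by (auto simp: add_source_def)
  next
    assume "s = bump p @ hchi []"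
    then show "(p @ [2], s) \<in> fire_step\<^sup>* \<and> stable s" using st sd by auto
  qed
next
  case (Cons a t)
  let ?d = "bump p @ 0 # Suc a # t"
  have st: "(p @ 2 # a # t, ?d) \<in> fire_step" using hot_step[of p "a # t"] Cons.prems
    by (simp add: add_source_def)
  show ?case
  proof (cases "a = 0")
    case True
    have sd: "stable ?d" using Cons.prems True by (auto simp: stable_set bump_def dest: in_set_butlastD)
    show ?thesis
    proof
      assume a: "(p @ 2 # a # t, s) \<in> fire_step\<^sup>* \<and> stable s"
      then have "p @ 2 # a # t \<noteq> s" by (auto simp: stable_set)
      then obtain d where "(p @ 2 # a # t, d) \<in> fire_step" "(d, s) \<in> fire_step\<^sup>*"
        using a by (meson converse_rtranclE)
      then show "s = bump p @ hchi (a # t)" using hot_step[of p "a # t"] Cons.prems sd stable_rtrancl True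
        by (auto simp: add_source_def)
    next
      assume "s = bump p @ hchi (a # t)"
      then show "(p @ 2 # a # t, s) \<in> fire_step\<^sup>* \<and> stable s" using st sd True by auto
    qed
  next
    case False
    then have a1: "a = 1" using Cons.prems by auto
    have dd: "?d = (bump p @ [0]) @ 2 # t" using a1 by simp
    have p': "\<forall>x\<in>set (bump p @ [0]). x \<le> 1" using Cons.prems by (auto simp: bump_def dest: in_set_butlastD)
    have IH: "((bump p @ [0]) @ 2 # t, s) \<in> fire_step\<^sup>* \<and> stable s \<longleftrightarrow> s = bump (bump p @ [0]) @ hchi t"
      using Cons.IH[OF p'] Cons.prems by auto
    have bb: "bump (bump p @ [0]) @ hchi t = bump p @ hchi (a # t)" using a1 by (simp add: bump_def)
    show ?thesis
    proof
      assume a: "(p @ 2 # a # t, s) \<in> fire_step\<^sup>* \<and> stable s"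
      then have "p @ 2 # a # t \<noteq> s" by (auto simp: stable_set)
      then obtain d where "(p @ 2 # a # t, d) \<in> fire_step" "(d, s) \<in> fire_step\<^sup>*"
        using a by (meson converse_rtranclE)
      then have "d = ?d" using hot_step[of p "a # t"] Cons.prems by (simp add: add_source_def)
      then show "s = bump p @ hchi (a # t)" using IH bb a dd \<open>(d, s) \<in> fire_step\<^sup>*\<close> by auto
    next
      assume "s = bump p @ hchi (a # t)"
      then show "(p @ 2 # a # t, s) \<in> fire_step\<^sup>* \<and> stable s" using st IH bb dd
        by (metis converse_rtrancl_into_rtrancl)
    qed
  qed
qed

definition chif :: "nat list \<Rightarrow> nat list" where
  "chif w = (case w of [] \<Rightarrow> [] | a # v \<Rightarrow> if a = 0 then 1 # v else hchi v)"

lemma chi_eq: "\<forall>x\<in>set w. x \<le> 1 \<Longrightarrow> chi w = chif w"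
proof (cases w)
  case Nil
  then show ?thesis unfolding chi_def chif_def add_source_def
    by (simp, intro the_equality) (auto simp: stable_set intro: stable_rtrancl)
next
  case (Cons a v)
  assume w: "\<forall>x\<in>set w. x \<le> 1"
  show ?thesis
  proof (cases "a = 0")
    case True
    then show ?thesis unfolding chi_def chif_def add_source_def using Cons w
      by (intro the_equality) (auto simp: stable_set intro: stable_rtrancl)
  next
    case False
    then have "add_source w = [] @ 2 # v" using Cons w by (auto simp: add_source_def)
    then show ?thesis unfolding chi_def chif_def using Cons w False hot_main[of v "[]"]
      by (simp add: bump_def)
  qed
qed



lemma words_Suc: "words (Suc m) = Cons 0 ` words m \<union> Cons 1 ` words m"
  unfolding words_def by (auto simp: length_Suc_conv image_def)

lemma words_0: "words 0 = {[]}" unfolding words_def by auto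

lemma finite_words: "finite (words m)"
  by (induction m) (auto simp: words_0 words_Suc)

lemma card_words: "card (words m) = 2 ^ m"
proof (induction m)
  case 0 then show ?case by (simp add: words_0)
next
  case (Suc m)
  have "card (Cons 0 ` words m \<union> Cons 1 ` words m) = card (Cons 0 ` words m) + card (Cons (1::nat) ` words m)"
    by (rule card_Un_disjoint) (auto simp: finite_words)
  also have "\<dots> = 2 ^ m + 2 ^ m" using Suc by (simp add: card_image)
  finally show ?case by (simp add: words_Suc)
qed

lemma card_hd1: "card {v \<in> words (Suc k). hd v = 1} = 2 ^ k"
proof -
  have "{v \<in> words (Suc k). hd v = 1} = Cons 1 ` words k" by (auto simp: words_Suc)
  then show ?thesis by (simp add: card_image card_words)
qed

lemma words_le1: "w \<in> words m \<Longrightarrow> \<forall>x\<in>set w. x \<le> 1"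
  unfolding words_def by auto

lemma hchi_words: "v \<in> words m \<Longrightarrow> hchi v \<in> words (Suc m)"
proof (induction v arbitrary: m)
  case Nil then show ?case by (auto simp: words_def)
next
  case (Cons a v)
  then obtain k where "m = Suc k" "v \<in> words k" "a \<in> {0,1}" by (auto simp: words_def)
  then show ?case using Cons.IH by (auto simp: words_def)
qed

lemma hchi_inj: "\<forall>x\<in>set v. x \<le> 1 \<Longrightarrow> \<forall>x\<in>set v'. x \<le> 1 \<Longrightarrow> hchi v = hchi v' \<Longrightarrow> v = v'"
proof (induction v arbitrary: v')
  case Nil then show ?case
  proof (cases v')
    case (Cons b w) then show ?thesis using Nil by (cases "b = 0") simp_all
  qed simp
next
  case (Cons a v)
  show ?case
  proof (cases v')
    case Nil then show ?thesis using Cons.prems by (cases "a = 0") simp_all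
  next
    case (Cons b w)
    show ?thesis
    proof (cases "a = 0")
      case True
      then show ?thesis using Cons Cons.prems by (cases "b = 0") simp_all
    next
      case False
      then have a1: "a = 1" using Cons.prems by auto
      show ?thesis
      proof (cases "b = 0")
        case True then show ?thesis using Cons Cons.prems False by simp
      next
        case False
        then have "b = 1" using Cons Cons.prems by auto
        moreover have "hchi v = hchi w" using Cons Cons.prems False \<open>a \<noteq> 0\<close> by simp
        ultimately show ?thesis using Cons.IH[of w] Cons.prems Cons a1 by simp
      qed
    qed
  qed
qed

lemma hd_hchi: "\<forall>x\<in>set v. x \<le> 1 \<Longrightarrow> hd (hchi v) = 1 \<longleftrightarrow> v \<noteq> [] \<and> hd v = 1"
  by (cases v) auto

lemma chif_words: assumes that: "w \<in> words m" shows "chif w \<in> words m"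
proof (cases w)
  case Nil then show ?thesis using that by (simp add: chif_def)
next
  case (Cons a v)
  with that obtain k where "m = Suc k" "v \<in> words k" "a \<in> {0,1}" by (auto simp: words_def)
  then show ?thesis using Cons hchi_words by (auto simp: chif_def words_def)
qed

lemma sumsq:
  assumes "m \<ge> 1"
  shows "(\<Sum>y\<in>words (Suc m). (card {x\<in>words (Suc m). chif x = y})^2) = 3 * 2 ^ m"
proof -
  let ?X = "words (Suc m)"
  define a where "a y = (if hd y = (1::nat) then 1 else (0::nat))" for y
  define b where "b y = card {v\<in>words m. hchi v = y}" for y
  have fin: "finite ?X" by (rule finite_words)
  have card_fib: "card {x\<in>?X. chif x = y} = a y + b y" if y: "y \<in> ?X" for y
  proof -
    have "{x\<in>?X. chif x = y} = {x\<in>Cons 0 ` words m. chif x = y} \<union> Cons 1 ` {v\<in>words m. hchi v = y}"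
      by (auto simp: words_Suc chif_def)
    moreover have "{x\<in>Cons 0 ` words m. chif x = y} = (if hd y = 1 then {0 # tl y} else {})"
      using y by (cases y) (auto simp: words_Suc chif_def)
    ultimately have "card {x\<in>?X. chif x = y} = card (if hd y = 1 then {0 # tl y} else {}) + card (Cons 1 ` {v\<in>words m. hchi v = y})"
    proof -
      assume e1: "{x\<in>?X. chif x = y} = {x\<in>Cons 0 ` words m. chif x = y} \<union> Cons 1 ` {v\<in>words m. hchi v = y}"
        and e2: "{x\<in>Cons 0 ` words m. chif x = y} = (if hd y = 1 then {0 # tl y} else {})"
      have "(if hd y = 1 then {0 # tl y} else {}) \<inter> Cons 1 ` {v\<in>words m. hchi v = y} = {}" by auto
      moreover have "finite (Cons 1 ` {v\<in>words m. hchi v = y})" using finite_words by auto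
      ultimately show ?thesis unfolding e1 e2 by (intro card_Un_disjoint) auto
    qed
    then show ?thesis by (simp add: card_image a_def b_def)
  qed
  have b01: "b y \<le> 1" for y
  proof -
    have "\<forall>u\<in>{v\<in>words m. hchi v = y}. \<forall>u'\<in>{v\<in>words m. hchi v = y}. u = u'"
      using hchi_inj words_le1 by blast
    then have "card {v\<in>words m. hchi v = y} \<le> Suc 0"
      using card_le_Suc0_iff_eq[of "{v\<in>words m. hchi v = y}"] finite_words by auto
    then show ?thesis by (simp add: b_def)
  qed
  have sq: "(a y + b y)^2 = a y + b y + 2 * (b y * a y)" for y
    using b01[of y] by (cases "b y") (auto simp: a_def power2_eq_square)
  have "(\<Sum>y\<in>?X. (card {x\<in>?X. chif x = y})^2) = (\<Sum>y\<in>?X. a y + b y + 2 * (b y * a y))"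
    using card_fib sq by (simp cong: sum.cong)
  also have "\<dots> = sum a ?X + sum b ?X + 2 * (\<Sum>y\<in>?X. b y * a y)"
    by (simp add: sum.distrib sum_distrib_left)
  finally have eq: "(\<Sum>y\<in>?X. (card {x\<in>?X. chif x = y})^2) = sum a ?X + sum b ?X + 2 * (\<Sum>y\<in>?X. b y * a y)" .
  have img: "hchi ` words m \<subseteq> ?X" using hchi_words by auto
  have sa: "sum a ?X = 2 ^ m"
    using fin card_hd1[of m] by (simp add: a_def sum.If_cases Int_def)
  have sb: "sum b ?X = 2 ^ m"
    using sum_fun_comp[OF finite_words fin img, of "\<lambda>_. 1::nat"] card_words[of m] by (simp add: b_def)
  have "(\<Sum>y\<in>?X. b y * a y) = (\<Sum>v\<in>words m. a (hchi v))"
    using sum_fun_comp[OF finite_words fin img, of a] by (simp add: b_def)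
  also have "\<dots> = card {v\<in>words m. hd (hchi v) = 1}"
    using finite_words[of m] by (simp add: a_def sum.If_cases Int_def)
  also have "{v\<in>words m. hd (hchi v) = 1} = {v\<in>words m. hd v = 1}"
    using hd_hchi words_le1 assms by (auto simp: words_def)
  also have "card \<dots> = 2 ^ (m - 1)" using card_hd1[of "m - 1"] assms by simp
  finally have sab: "(\<Sum>y\<in>?X. b y * a y) = 2 ^ (m - 1)" .
  have "2 * 2 ^ (m - 1) = (2::nat) ^ m" using assms by (metis Suc_diff_le diff_Suc_1 power_Suc)
  then show ?thesis using eq sa sb sab by simp
qed

theorem mainTheorem13:
  fixes n :: nat
  assumes "n \<ge> 2"
  shows "deg (words n) (words n) chi = 3 / 2"
proof -
  obtain m where m: "n = Suc m" "m \<ge> 1" using assms by (metis Suc_le_D Suc_le_mono one_add_one plus_1_eq_Suc)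
  have "\<And>y. {x\<in>words n. chi x = y} = {x\<in>words n. chif x = y}"
    using chi_eq words_le1 by auto
  then have "(\<Sum>y\<in>words n. (real (card {x\<in>words n. chi x = y}))^2) = real (3 * 2 ^ m)"
    using sumsq[OF m(2)] m(1) by (simp flip: of_nat_power of_nat_sum)
  then show ?thesis unfolding deg_def using m card_words[of n] by simp
qed

end
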